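(* Suppose $\gamma=1$ and $0<q<1$. The Taylor coefficients $q_k$ of $\log\mathbb{E}[z^B]=\sum_{k\ge0}q_kz^k$ around $z=0$ are $$q_0=-\frac{\theta}{q}\log\left(1+\frac{\phi q}{1-q}\right),\qquad q_k=\frac{\theta\phi^k}{[1-q(1-\phi)]^k}\left[\frac1k-\frac{\phi}{k+1}\,{}_2F_1\!\left(1,1;2+k;-\frac{\phi q}{1-q}\right)\right]\quad(k\ge1),$$ where $\phi=1-1/N$ and $\theta=N\mu$. If $q=0$, then $q_0=-\theta\phi$ and $q_k=\theta\left(\frac{\phi^k}{k}-\frac{\phi^{k+1}}{k+1}\right)$ for $k\ge1$. In all cases $\mathbb{P}(B=0)=e^{q_0}$ and $\mathbb{P}(B=n)=\frac1n\sum_{k=0}^{n-1}(n-k)q_{n-k}\mathbb{P}(B=k)$ for $n\ge1$.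
   Context: Model: fix $\delta>0$, $\nu>0$ and $\alpha>\beta\ge 0$, and put $\lambda=\alpha-\beta>0$. The wild-type population is deterministic, of size $e^{\delta t}$ at time $t\ge0$. Mutants arise at the points of an inhomogeneous Poisson process on $[0,\infty)$ with intensity $\nu e^{\delta t}$. Each mutant arising at time $s$ founds a clone that evolves as a linear birth–death process started from one cell, with per-capita birth rate $\alpha$ and death rate $\beta$. Clones are independent of each other and of the Poisson process. For $N>1$ let $\tau=\log N/\delta$, and let $B$ be the total number of mutant cells alive at time $\tau$. Notation: $q=\beta/\alpha\in[0,1)$, $\gamma=\delta/\lambda$, $\mu=\nu/\alpha$. ${}_2F_1$ denotes the Gauss hypergeometric function. *)

theory Defs
  imports "HOL-Analysis.Analysis"
begin

text \<open>Gauss hypergeometric function 2F1(a,b;c;x), given by Euler's integral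
  representation, which is the principal branch (analytic continuation of the
  power series) on x < 1, valid for c > b > 0.\<close>
definition hyp2f1 :: "real \<Rightarrow> real \<Rightarrow> real \<Rightarrow> real \<Rightarrow> real" where
  "hyp2f1 a b c x =
     Gamma c / (Gamma b * Gamma (c - b)) *
     integral {0..1} (\<lambda>t. t powr (b - 1) * (1 - t) powr (c - b - 1) * (1 - x * t) powr (- a))"

text \<open>Law at time t of a linear birth-death process (birth rate alpha, death rate beta,
  alpha > beta) started from a single cell: probability of n cells alive at time t.\<close>
definition bd_prob :: "real \<Rightarrow> real \<Rightarrow> real \<Rightarrow> nat \<Rightarrow> real" where
  "bd_prob \<alpha> \<beta> t n =
     (let E = exp ((\<alpha> - \<beta>) * t);
          p0 = \<beta> * (E - 1) / (\<alpha> * E - \<beta>);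
          \<xi> = \<alpha> * (E - 1) / (\<alpha> * E - \<beta>)
      in if n = 0 then p0 else (1 - p0) * (1 - \<xi>) * \<xi> ^ (n - 1))"

definition conv :: "(nat \<Rightarrow> real) \<Rightarrow> (nat \<Rightarrow> real) \<Rightarrow> nat \<Rightarrow> real" where
  "conv f g n = (\<Sum>k\<le>n. f k * g (n - k))"

fun conv_pow :: "(nat \<Rightarrow> real) \<Rightarrow> nat \<Rightarrow> nat \<Rightarrow> real" where
  "conv_pow f 0 = (\<lambda>n. if n = 0 then 1 else 0)"
| "conv_pow f (Suc m) = conv f (conv_pow f m)"

text \<open>Total mutation intensity on [0,tau] (mean number of mutants arising by time tau).\<close>
definition mut_mass :: "real \<Rightarrow> real \<Rightarrow> real \<Rightarrow> real" where
  "mut_mass \<delta> \<nu> \<tau> = integral {0..\<tau>} (\<lambda>s. \<nu> * exp (\<delta> * s))"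

text \<open>Intensity-weighted law of the size at time tau of a clone founded by a mutant:
  integral over the arrival time s of nu e^(delta s) P(X_(tau-s) = n).\<close>
definition clone_weight :: "real \<Rightarrow> real \<Rightarrow> real \<Rightarrow> real \<Rightarrow> real \<Rightarrow> nat \<Rightarrow> real" where
  "clone_weight \<alpha> \<beta> \<delta> \<nu> \<tau> n =
     integral {0..\<tau>} (\<lambda>s. \<nu> * exp (\<delta> * s) * bd_prob \<alpha> \<beta> (\<tau> - s) n)"

text \<open>P(B = n), B = number of mutant cells at time tau = ln N / delta. B is the sum over
  the Poisson-many mutants of independent clone sizes (compound Poisson law).\<close>
definition probB :: "real \<Rightarrow> real \<Rightarrow> real \<Rightarrow> real \<Rightarrow> real \<Rightarrow> nat \<Rightarrow> real" where
  "probB \<alpha> \<beta> \<delta> \<nu> N n =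
     (let \<tau> = ln N / \<delta> in
      exp (- mut_mass \<delta> \<nu> \<tau>) *
      (\<Sum>m. conv_pow (clone_weight \<alpha> \<beta> \<delta> \<nu> \<tau>) m n / fact m))"

definition pgfB :: "real \<Rightarrow> real \<Rightarrow> real \<Rightarrow> real \<Rightarrow> real \<Rightarrow> real \<Rightarrow> real" where
  "pgfB \<alpha> \<beta> \<delta> \<nu> N z = (\<Sum>n. probB \<alpha> \<beta> \<delta> \<nu> N n * z ^ n)"

end

theory Submission
  imports Defs
begin


lemma conv_pow_fps: "conv_pow w m n = fps_nth (Abs_fps w ^ m) n"
proof (induction m arbitrary: n)
  case 0
  then show ?case by simp
next
  case (Suc m)
  show ?case
    by (simp add: conv_def fps_mult_nth Suc atLeast0AtMost)
qed

lemma conv_pow_bound: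
  fixes w :: "nat \<Rightarrow> real"
  assumes nn: "\<And>n. w n \<ge> 0" and bd: "\<And>n. w n \<le> K"
  shows "j \<le> n \<Longrightarrow> 0 \<le> fps_nth (Abs_fps w ^ m) j \<and> fps_nth (Abs_fps w ^ m) j \<le> (real (Suc n) * K) ^ m"
proof (induction m arbitrary: j)
  case 0
  have "K \<ge> 0" using nn[of 0] bd[of 0] by linarith
  then show ?case by simp
next
  case (Suc m)
  have K0: "K \<ge> 0" using nn[of 0] bd[of 0] by linarith
  have eq: "fps_nth (Abs_fps w ^ Suc m) j = (\<Sum>i=0..j. w i * fps_nth (Abs_fps w ^ m) (j - i))"
    by (simp add: fps_mult_nth)
  have t: "\<And>i. i \<in> {0..j} \<Longrightarrow> 0 \<le> w i * fps_nth (Abs_fps w ^ m) (j - i) \<and>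
      w i * fps_nth (Abs_fps w ^ m) (j - i) \<le> K * (real (Suc n) * K) ^ m"
  proof -
    fix i assume "i \<in> {0..j}"
    then have "j - i \<le> n" using Suc.prems by auto
    from Suc.IH[OF this] show "0 \<le> w i * fps_nth (Abs_fps w ^ m) (j - i) \<and>
      w i * fps_nth (Abs_fps w ^ m) (j - i) \<le> K * (real (Suc n) * K) ^ m"
      using nn[of i] bd[of i] by (auto intro: mult_mono)
  qed
  have "(\<Sum>i=0..j. w i * fps_nth (Abs_fps w ^ m) (j - i)) \<le> (\<Sum>i=0..j. K * (real (Suc n) * K) ^ m)"
    by (rule sum_mono) (use t in auto)
  also have "\<dots> = real (Suc j) * K * (real (Suc n) * K) ^ m" by simp
  also have "\<dots> \<le> real (Suc n) * K * (real (Suc n) * K) ^ m"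
    using Suc.prems K0 by (intro mult_right_mono) auto
  finally show ?case using t eq by (auto intro: sum_nonneg simp: mult.assoc)
qed

lemma cp_summable:
  fixes w :: "nat \<Rightarrow> real"
  assumes nn: "\<And>n. w n \<ge> 0" and bd: "\<And>n. w n \<le> K"
  shows "summable (\<lambda>m. conv_pow w m n / fact m)"
proof (rule summable_comparison_test')
  show "summable (\<lambda>m. inverse (fact m) * (real (Suc n) * K) ^ m)" by (rule summable_exp)
  fix m :: nat
  have "0 \<le> fps_nth (Abs_fps w ^ m) n \<and> fps_nth (Abs_fps w ^ m) n \<le> (real (Suc n) * K) ^ m"
    by (rule conv_pow_bound[OF nn bd]) simp
  then show "norm (conv_pow w m n / fact m) \<le> inverse (fact m) * (real (Suc n) * K) ^ m"
    by (simp add: conv_pow_fps divide_simps)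
qed

lemma cp_nonneg:
  fixes w :: "nat \<Rightarrow> real"
  assumes nn: "\<And>n. w n \<ge> 0" and bd: "\<And>n. w n \<le> K"
  shows "conv_pow w m n \<ge> 0"
  using conv_pow_bound[OF nn bd, where j=n and n=n and m=m] by (simp add: conv_pow_fps)

lemma cp_p0:
  fixes w :: "nat \<Rightarrow> real"
  shows "(\<Sum>m. conv_pow w m 0 / fact m) = exp (w 0)"
proof -
  have "(\<lambda>m. conv_pow w m 0 / fact m) = (\<lambda>m. w 0 ^ m /\<^sub>R fact m)"
    by (simp add: conv_pow_fps fps_nth_power_0 divide_simps)
  then show ?thesis using exp_converges[of "w 0"] sums_unique by metis
qed

lemma cp_deriv_coeff:
  fixes w :: "nat \<Rightarrow> real"
  assumes "n \<ge> 1"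
  shows "real n * conv_pow w (Suc m) n =
     real (Suc m) * (\<Sum>k<n. real (n - k) * w (n - k) * conv_pow w m k)"
proof -
  define W where "W = Abs_fps w"
  have "fps_deriv (W ^ Suc m) = of_nat (Suc m) * fps_deriv W * W ^ m"
    by (metis diff_Suc_1 fps_deriv_power')
  then have "fps_nth (fps_deriv (W ^ Suc m)) (n - 1) = fps_nth (of_nat (Suc m) * (W ^ m * fps_deriv W)) (n - 1)"
    by (simp add: ac_simps)
  also have "\<dots> = real (Suc m) * fps_nth (W ^ m * fps_deriv W) (n - 1)"
    by (metis fps_mult_left_const_nth fps_of_nat)
  also have "fps_nth (W ^ m * fps_deriv W) (n - 1) = (\<Sum>i=0..n-1. fps_nth (W ^ m) i * (real (n - 1 - i + 1) * w (n - 1 - i + 1)))"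
    by (simp add: fps_mult_nth W_def)
  also have "\<dots> = (\<Sum>k<n. real (n - k) * w (n - k) * fps_nth (W ^ m) k)"
  proof -
    have "{0..n-1} = {..<n}" using assms by auto
    moreover have "\<And>i. i < n \<Longrightarrow> n - 1 - i + 1 = n - i" by auto
    ultimately show ?thesis by (auto intro!: sum.cong simp: ac_simps)
  qed
  finally have "fps_nth (fps_deriv (W ^ Suc m)) (n - 1) = real (Suc m) * (\<Sum>k<n. real (n - k) * w (n - k) * fps_nth (W ^ m) k)" .
  moreover have "fps_nth (fps_deriv (W ^ Suc m)) (n - 1) = real n * fps_nth (W ^ Suc m) n"
  proof -
    have "fps_nth (fps_deriv (W ^ Suc m)) (n - 1) = of_nat (n - 1 + 1) * fps_nth (W ^ Suc m) (n - 1 + 1)"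
      by (rule fps_deriv_nth)
    moreover have "n - 1 + 1 = n" using assms by simp
    ultimately show ?thesis by simp
  qed
  ultimately have "real n * fps_nth (W ^ Suc m) n = real (Suc m) * (\<Sum>k<n. real (n - k) * w (n - k) * fps_nth (W ^ m) k)"
    by (simp only:)
  then show ?thesis by (simp only: conv_pow_fps W_def)
qed

lemma cp_rec:
  fixes w :: "nat \<Rightarrow> real" and M0 :: real
  assumes nn: "\<And>n. w n \<ge> 0" and bd: "\<And>n. w n \<le> K" and n: "n \<ge> 1"
  defines "p \<equiv> \<lambda>n. exp (-M0) * (\<Sum>m. conv_pow w m n / fact m)"
  shows "p n = 1 / real n * (\<Sum>k<n. real (n - k) * w (n - k) * p k)"
proof -
  have S: "\<And>j. summable (\<lambda>m. conv_pow w m j / fact m)" by (rule cp_summable[OF nn bd])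
  have "real n * (\<Sum>m. conv_pow w m n / fact m) = (\<Sum>m. real n * (conv_pow w m n / fact m))"
    using suminf_mult[OF S] by simp
  also have "\<dots> = (\<Sum>m. real n * (conv_pow w (Suc m) n / fact (Suc m)))"
  proof -
    have "summable (\<lambda>m. real n * (conv_pow w m n / fact m))" using S summable_mult by blast
    from suminf_split_head[OF this] show ?thesis using n by simp
  qed
  also have "\<dots> = (\<Sum>m. \<Sum>k<n. real (n - k) * w (n - k) * (conv_pow w m k / fact m))"
  proof (rule suminf_cong)
    fix m
    have "real n * (conv_pow w (Suc m) n / fact (Suc m)) = real (Suc m) * (\<Sum>k<n. real (n - k) * w (n - k) * conv_pow w m k) / fact (Suc m)"
      using cp_deriv_coeff[OF n, where w=w and m=m] by simp
    also have "\<dots> = (\<Sum>k<n. real (n - k) * w (n - k) * conv_pow w m k) / fact m"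
      by (simp add: fact_Suc divide_simps del: of_nat_Suc)
    finally show "real n * (conv_pow w (Suc m) n / fact (Suc m)) = (\<Sum>k<n. real (n - k) * w (n - k) * (conv_pow w m k / fact m))"
      by (simp add: sum_divide_distrib)
  qed
  also have "\<dots> = (\<Sum>k<n. \<Sum>m. real (n - k) * w (n - k) * (conv_pow w m k / fact m))"
    by (rule suminf_sum) (intro summable_mult S)
  also have "\<dots> = (\<Sum>k<n. real (n - k) * w (n - k) * (\<Sum>m. conv_pow w m k / fact m))"
    by (intro sum.cong refl suminf_mult S)
  finally have "real n * (\<Sum>m. conv_pow w m n / fact m) = (\<Sum>k<n. real (n - k) * w (n - k) * (\<Sum>m. conv_pow w m k / fact m))" .
  then have "exp (-M0) * (real n * (\<Sum>m. conv_pow w m n / fact m)) = exp (-M0) * (\<Sum>k<n. real (n - k) * w (n - k) * (\<Sum>m. conv_pow w m k / fact m))"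
    by simp
  then have "real n * p n = (\<Sum>k<n. real (n - k) * w (n - k) * p k)"
    unfolding p_def sum_distrib_left by (simp only: ac_simps)
  then show ?thesis using n by (simp add: field_simps)
qed

lemma cp_radius:
  fixes w :: "nat \<Rightarrow> real"
  assumes nn: "\<And>n. w n \<ge> 0" and bd: "\<And>n. w n \<le> K"
  shows "fps_conv_radius (Abs_fps w) \<ge> 1"
  unfolding fps_conv_radius_def
proof (rule conv_radius_geI_ex')
  fix r :: real assume r: "0 < r" "ereal r < 1"
  then have r1: "r < 1" by simp
  show "summable (\<lambda>n. fps_nth (Abs_fps w) n * of_real r ^ n)"
  proof (rule summable_comparison_test')
    show "summable (\<lambda>n. K * r ^ n)" using r r1 by (intro summable_mult summable_geometric) simp
    fix n
    show "norm (fps_nth (Abs_fps w) n * of_real r ^ n) \<le> K * r ^ n"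
      using nn[of n] bd[of n] r by (simp add: abs_mult mult_right_mono)
  qed
qed

lemma cp_pgf:
  fixes w :: "nat \<Rightarrow> real" and M0 z :: real
  assumes nn: "\<And>n. w n \<ge> 0" and bd: "\<And>n. w n \<le> K" and z: "\<bar>z\<bar> < 1"
  shows "(\<lambda>n. (exp (-M0) * (\<Sum>m. conv_pow w m n / fact m)) * z ^ n) sums (exp (-M0) * exp (\<Sum>n. w n * z ^ n))"
    and "summable (\<lambda>n. w n * z ^ n)"
proof -
  define W where "W = Abs_fps w"
  have rad: "\<And>x::real. \<bar>x\<bar> < 1 \<Longrightarrow> ereal (norm x) < fps_conv_radius (W ^ m)" for m
  proof -
    fix x :: real assume "\<bar>x\<bar> < 1"
    then have "ereal (norm x) < 1" by simp
    also have "1 \<le> fps_conv_radius W" unfolding W_def by (rule cp_radius[OF nn bd])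
    also have "\<dots> \<le> fps_conv_radius (W ^ m)" by (rule fps_conv_radius_power)
    finally show "ereal (norm x) < fps_conv_radius (W ^ m)" .
  qed
  have powsums: "\<And>x::real. \<bar>x\<bar> < 1 \<Longrightarrow> (\<lambda>n. fps_nth (W ^ m) n * x ^ n) sums (eval_fps W x ^ m)" for m
  proof -
    fix x :: real assume x: "\<bar>x\<bar> < 1"
    have "(\<lambda>n. fps_nth (W ^ m) n * x ^ n) sums eval_fps (W ^ m) x"
      by (rule sums_eval_fps) (rule rad[OF x])
    moreover have "eval_fps (W ^ m) x = eval_fps W x ^ m"
      by (rule eval_fps_power) (use rad[OF x, of 1] in simp)
    ultimately show "(\<lambda>n. fps_nth (W ^ m) n * x ^ n) sums (eval_fps W x ^ m)" by simp
  qed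
  have Weval: "eval_fps W x = (\<Sum>n. w n * x ^ n)" for x
    by (simp add: eval_fps_def W_def)
  have Wsum: "summable (\<lambda>n. w n * z ^ n)"
    using powsums[OF z, of 1] by (auto simp: W_def sums_iff)
  then show "summable (\<lambda>n. w n * z ^ n)" .
  have coef_nn: "\<And>m n. fps_nth (W ^ m) n \<ge> 0"
    using cp_nonneg[OF nn bd] by (simp add: conv_pow_fps W_def)
  define a where "a = (\<lambda>m n. conv_pow w m n * z ^ n / fact m)"
  define Wz where "Wz = eval_fps W z"
  define Wa where "Wa = eval_fps W \<bar>z\<bar>"
  have za: "\<bar>\<bar>z\<bar>\<bar> < 1" using z by simp
  have Wa_nn: "Wa \<ge> 0"
  proof -
    have h: "(\<lambda>n. fps_nth (W ^ 1) n * \<bar>z\<bar> ^ n) sums (Wa ^ 1)" unfolding Wa_def by (rule powsums[OF za])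
    have "0 \<le> Wa ^ 1"
      by (rule sums_le[OF _ sums_zero h]) (intro mult_nonneg_nonneg coef_nn zero_le_power abs_ge_zero)
    then show ?thesis by simp
  qed
  have inner1: "((\<lambda>n. a m n) has_sum (Wz ^ m / fact m)) UNIV" for m
  proof (rule norm_summable_imp_has_sum)
    have "(\<lambda>n. fps_nth (W ^ m) n * \<bar>z\<bar> ^ n / fact m) sums (Wa ^ m / fact m)"
      unfolding Wa_def by (intro sums_divide powsums za)
    moreover have "(\<lambda>n. norm (a m n)) = (\<lambda>n. fps_nth (W ^ m) n * \<bar>z\<bar> ^ n / fact m)"
      using coef_nn by (auto simp: a_def conv_pow_fps W_def abs_mult power_abs)
    ultimately show "summable (\<lambda>n. norm (a m n))" by (simp add: sums_iff)
    have "(\<lambda>n. fps_nth (W ^ m) n * z ^ n / fact m) sums (Wz ^ m / fact m)"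
      unfolding Wz_def by (intro sums_divide powsums z)
    then show "(\<lambda>n. a m n) sums (Wz ^ m / fact m)" by (simp add: a_def conv_pow_fps W_def)
  qed
  have inner2: "((\<lambda>n. norm (a m n)) has_sum (Wa ^ m / fact m)) UNIV" for m
  proof (rule sums_nonneg_imp_has_sum)
    have "(\<lambda>n. fps_nth (W ^ m) n * \<bar>z\<bar> ^ n / fact m) sums (Wa ^ m / fact m)"
      unfolding Wa_def by (intro sums_divide powsums za)
    moreover have "(\<lambda>n. norm (a m n)) = (\<lambda>n. fps_nth (W ^ m) n * \<bar>z\<bar> ^ n / fact m)"
      using coef_nn by (auto simp: a_def conv_pow_fps W_def abs_mult power_abs)
    ultimately show "(\<lambda>n. norm (a m n)) sums (Wa ^ m / fact m)" by simp
  qed simp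
  have outer2: "(\<lambda>m. Wa ^ m / fact m) summable_on UNIV"
  proof -
    have "(\<lambda>m. Wa ^ m / fact m) sums exp Wa" using exp_converges[of Wa] by (simp add: divide_inverse ac_simps)
    then have "((\<lambda>m. Wa ^ m / fact m) has_sum exp Wa) UNIV"
      by (rule sums_nonneg_imp_has_sum) (use Wa_nn in simp)
    then show ?thesis by (rule has_sum_imp_summable)
  qed
  have "(\<lambda>(m, n). norm (a m n)) summable_on (UNIV \<times> UNIV)"
    by (rule summable_on_SigmaI[where g = "\<lambda>m. Wa ^ m / fact m"]) (use inner2 outer2 in auto)
  then have "(\<lambda>x. norm ((\<lambda>(m, n). a m n) x)) summable_on (UNIV \<times> UNIV)"
    by (simp add: case_prod_unfold)
  then have summ: "(\<lambda>(m, n). a m n) summable_on (UNIV \<times> UNIV)"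
    by (rule abs_summable_summable)
  define S where "S = infsum (\<lambda>(m, n). a m n) (UNIV \<times> UNIV)"
  have hS: "((\<lambda>(m, n). a m n) has_sum S) (UNIV \<times> UNIV)"
    using summ unfolding S_def by (rule has_sum_infsum)
  have "((\<lambda>m. Wz ^ m / fact m) has_sum S) UNIV"
    by (rule has_sum_Sigma'[OF hS]) (use inner1 in simp)
  then have "(\<lambda>m. Wz ^ m / fact m) sums S" by (rule has_sum_imp_sums)
  moreover have "(\<lambda>m. Wz ^ m / fact m) sums exp Wz" using exp_converges[of Wz] by (simp add: divide_inverse ac_simps)
  ultimately have S_eq: "S = exp Wz" using sums_unique2 by blast
  have hS': "((\<lambda>(n, m). a m n) has_sum S) (UNIV \<times> UNIV)"
    using hS by (subst (asm) has_sum_swap) (simp add: case_prod_unfold)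
  have inner3: "((\<lambda>m. a m n) has_sum ((\<Sum>m. conv_pow w m n / fact m) * z ^ n)) UNIV" for n
  proof (rule norm_summable_imp_has_sum)
    have sm: "summable (\<lambda>m. conv_pow w m n / fact m)" by (rule cp_summable[OF nn bd])
    have "(\<lambda>m. norm (a m n)) = (\<lambda>m. conv_pow w m n / fact m * \<bar>z\<bar> ^ n)"
      using cp_nonneg[OF nn bd] by (auto simp: a_def abs_mult power_abs)
    then show "summable (\<lambda>m. norm (a m n))" using summable_mult2[OF sm] by simp
    show "(\<lambda>m. a m n) sums ((\<Sum>m. conv_pow w m n / fact m) * z ^ n)"
      using sums_mult2[OF summable_sums[OF sm], of "z ^ n"] by (simp add: a_def ac_simps)
  qed
  have "((\<lambda>n. (\<Sum>m. conv_pow w m n / fact m) * z ^ n) has_sum S) UNIV"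
    by (rule has_sum_Sigma'[OF hS']) (use inner3 in simp)
  then have "(\<lambda>n. (\<Sum>m. conv_pow w m n / fact m) * z ^ n) sums exp Wz"
    using S_eq by (simp add: has_sum_imp_sums)
  then have "(\<lambda>n. exp (-M0) * ((\<Sum>m. conv_pow w m n / fact m) * z ^ n)) sums (exp (-M0) * exp Wz)"
    by (rule sums_mult)
  then show "(\<lambda>n. (exp (-M0) * (\<Sum>m. conv_pow w m n / fact m)) * z ^ n) sums (exp (-M0) * exp (\<Sum>n. w n * z ^ n))"
    by (simp add: Wz_def Weval ac_simps)
qed



lemma ftc_real:
  fixes F f D :: "real \<Rightarrow> real"
  assumes "a \<le> b" and "\<And>x. x \<in> {a..b} \<Longrightarrow> (F has_real_derivative D x) (at x)"
    and "\<And>x. x \<in> {a..b} \<Longrightarrow> D x = f x"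
  shows "(f has_integral (F b - F a)) {a..b}"
proof (rule fundamental_theorem_of_calculus[OF assms(1)])
  fix x assume x: "x \<in> {a..b}"
  have "(F has_real_derivative f x) (at x)" using assms(2,3)[OF x] by simp
  then show "(F has_vector_derivative f x) (at x within {a..b})"
    by (simp add: has_real_derivative_iff_has_vector_derivative[symmetric] has_field_derivative_at_within)
qed

lemma alg_Suc:
  fixes a l E D N nu x :: real
  assumes "a > 0" "E > 0" "D > 0"
  shows "nu * (N / E) * ((l * E / D) * (l / D) * x ^ j) = N * (nu / a) * x ^ j * (- (- a * l ^ 2 * E / D ^ 2)) / E"
  using assms by (simp add: field_simps power2_eq_square)

lemma alg_0:
  fixes a b l E D N nu :: real
  assumes "a > 0" "E > 0" "D > 0" "l > 0"
  shows "nu * (N / E) * (b * (E - 1) / D) = - (N * (nu / a)) * (b / a) * (a * (E - 1) / D) * (- a * l ^ 2 * E / D ^ 2) / (l * E / D) ^ 2"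
  using assms by (simp add: field_simps power2_eq_square)

lemma alg_w0:
  fixes th q d x :: real
  assumes "q \<noteq> 0" "1 - q * x \<noteq> 0"
  shows "- th / q * ((- (q * d)) / (1 - q * x) - (- (q * d)) / (1 - q * x) ^ 2) = - th * q * x * d / (1 - q * x) ^ 2"
proof -
  define u where "u = 1 - q * x"
  have x: "q * x = 1 - u" by (simp add: u_def)
  have u: "u \<noteq> 0" using assms by (simp add: u_def)
  have "- th / q * ((- (q * d)) / u - (- (q * d)) / u ^ 2) = th * d * (u - 1) / u ^ 2"
    using u assms(1) by (simp add: field_simps power2_eq_square)
  also have "\<dots> = - th * (q * x) * d / u ^ 2" using u by (simp add: x field_simps)
  finally show ?thesis by (simp add: u_def mult.assoc)
qed

lemma alg_split:
  fixes th x d E cc phi q yy :: real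
  assumes R1: "x * (1 - q) / (1 - q * x) = (E - 1) / E"
    and R2: "cc * (1 - yy) + yy * x = phi * (1 - q * x) / (1 - q)"
    and pos: "E > 0" "cc > 0" "1 - q * x > 0" "q < 1" "phi > 0"
  shows "th * x ^ j * (- d) / E = - th * x ^ j * d - th * cc ^ Suc j * phi * ((- d / cc) * ((1 - (1 - x / cc)) ^ Suc j / (1 - yy * (1 - x / cc))))"
proof -
  have e1: "1 - (1 - x / cc) = x / cc" by simp
  have e2: "1 - yy * (1 - x / cc) = phi * (1 - q * x) / ((1 - q) * cc)"
  proof -
    have "1 - yy * (1 - x / cc) = (cc * (1 - yy) + yy * x) / cc" using pos by (simp add: field_simps)
    then show ?thesis unfolding R2 by simp
  qed
  have e3: "cc ^ Suc j * (x / cc) ^ Suc j = x ^ Suc j"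
    using pos by (simp add: power_divide)
  have "th * cc ^ Suc j * phi * ((- d / cc) * ((1 - (1 - x / cc)) ^ Suc j / (1 - yy * (1 - x / cc))))
     = - th * d * (cc ^ Suc j * (x / cc) ^ Suc j) * (1 - q) / (1 - q * x)"
    unfolding e1 e2 using pos by (simp add: field_simps)
  also have "\<dots> = - th * d * x ^ j * (x * (1 - q) / (1 - q * x))"
    unfolding e3 by (simp add: field_simps)
  also have "\<dots> = - th * d * x ^ j * ((E - 1) / E)" unfolding R1 ..
  finally have "th * cc ^ Suc j * phi * ((- d / cc) * ((1 - (1 - x / cc)) ^ Suc j / (1 - yy * (1 - x / cc))))
     = - th * d * x ^ j * ((E - 1) / E)" .
  then show ?thesis using pos by (simp add: field_simps)
qed

lemma hyp_eq:
  fixes y :: real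
  assumes "y \<le> 0" "k \<ge> 1"
  shows "hyp2f1 1 1 (2 + real k) y = real (Suc k) * integral {0..1} (\<lambda>t. (1 - t) ^ k / (1 - y * t))"
proof -
  have g1: "Gamma (2 + real k) = fact (Suc k)"
    using Gamma_fact[of "Suc k"] by (simp add: add.commute add.left_commute)
  have g2: "Gamma (2 + real k - 1) = fact k"
    using Gamma_fact[of k] by (simp add: add.commute)
  have c: "Gamma (2 + real k) / (Gamma 1 * Gamma (2 + real k - 1)) = real (Suc k)"
    unfolding g1 g2 by (simp add: fact_Suc del: of_nat_Suc)
  have "integral {0..1} (\<lambda>t. t powr (1 - 1) * (1 - t) powr (2 + real k - 1 - 1) * (1 - y * t) powr (- 1))
      = integral {0..1} (\<lambda>t. (1 - t) ^ k / (1 - y * t))"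
  proof (rule integral_spike[where S = "{0, 1}"])
    show "negligible {0::real, 1}" by simp
  next
    fix t :: real assume t: "t \<in> {0..1} - {0, 1}"
    then have t0: "0 < t" "t < 1" by auto
    have "1 - y * t \<ge> 1" using assms(1) t0 by (simp add: mult_nonpos_nonneg)
    then show "(1 - t) ^ k / (1 - y * t) = t powr (1 - 1) * (1 - t) powr (2 + real k - 1 - 1) * (1 - y * t) powr (- 1)"
      using t0 by (simp add: powr_realpow powr_neg_one)
  qed
  then show ?thesis unfolding hyp2f1_def c by simp
qed

lemma deriv_pow_div:
  fixes X :: "real \<Rightarrow> real"
  assumes "(X has_real_derivative d) (at s)"
  shows "((\<lambda>s. X s ^ Suc j / real (Suc j)) has_real_derivative X s ^ j * d) (at s)"
proof -
  have "((\<lambda>s. X s ^ Suc j / real (Suc j)) has_real_derivative (1 + of_nat j) * (d * X s ^ j) / real (Suc j)) (at s)"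
    by (intro DERIV_cdivide DERIV_power_Suc assms)
  moreover have "(1 + of_nat j) * (d * X s ^ j) / real (Suc j) = X s ^ j * d" by simp
  ultimately show ?thesis by (rule DERIV_cong)
qed

locale bdsetup =
  fixes \<alpha> \<beta> \<nu> N :: real
  assumes ab: "\<alpha> > \<beta>" and b0: "\<beta> \<ge> 0" and nu: "\<nu> > 0" and N1: "N > 1"
begin

definition "lam = \<alpha> - \<beta>"
definition "tau = ln N / lam"
definition "EE s = exp (lam * (tau - s))"
definition "X s = \<alpha> * (EE s - 1) / (\<alpha> * EE s - \<beta>)"
definition "Xd s = - \<alpha> * lam ^ 2 * EE s / (\<alpha> * EE s - \<beta>) ^ 2"

lemma lam_pos: "lam > 0" using ab by (simp add: lam_def)
lemma a_pos: "\<alpha> > 0" using ab b0 by simp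
lemma tau_pos: "tau > 0" using N1 lam_pos by (simp add: tau_def)

lemma EE_0: "EE 0 = N" using lam_pos N1 by (simp add: EE_def tau_def)
lemma EE_tau: "EE tau = 1" by (simp add: EE_def)
lemma EE_range: "s \<in> {0..tau} \<Longrightarrow> 1 \<le> EE s \<and> EE s \<le> N"
proof -
  assume s: "s \<in> {0..tau}"
  have "1 \<le> EE s" using s lam_pos by (simp add: EE_def)
  moreover have "lam * (tau - s) \<le> lam * tau" using s lam_pos by simp
  then have "EE s \<le> exp (lam * tau)" unfolding EE_def by simp
  moreover have "exp (lam * tau) = N" using lam_pos N1 by (simp add: tau_def)
  ultimately show ?thesis by simp
qed
lemma exp_EE: "exp (lam * s) * EE s = N"
proof -
  have "exp (lam * s) * EE s = exp (lam * tau)" unfolding EE_def exp_add[symmetric] by (simp add: algebra_simps)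
  also have "\<dots> = N" using lam_pos N1 by (simp add: tau_def)
  finally show ?thesis .
qed

lemma den_pos: "EE s \<ge> 1 \<Longrightarrow> \<alpha> * EE s - \<beta> > 0"
proof -
  assume "EE s \<ge> 1"
  then have "\<alpha> * EE s \<ge> \<alpha>" using a_pos by simp
  then show ?thesis using ab by simp
qed

lemma X_deriv: "EE s \<ge> 1 \<Longrightarrow> (X has_real_derivative Xd s) (at s)"
proof -
  assume e: "EE s \<ge> 1"
  have d: "\<alpha> * EE s - \<beta> \<noteq> 0" using den_pos[OF e] by simp
  have dE: "(EE has_real_derivative (- lam * EE s)) (at s)"
    unfolding EE_def[abs_def] by (auto intro!: derivative_eq_intros)
  have d1: "((\<lambda>s. \<alpha> * (EE s - 1)) has_real_derivative \<alpha> * (- lam * EE s)) (at s)"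
    by (auto intro!: derivative_eq_intros dE)
  have d2: "((\<lambda>s. \<alpha> * EE s - \<beta>) has_real_derivative \<alpha> * (- lam * EE s)) (at s)"
    by (auto intro!: derivative_eq_intros dE)
  have "((\<lambda>s. \<alpha> * (EE s - 1) / (\<alpha> * EE s - \<beta>)) has_real_derivative
     ((\<alpha> * (- lam * EE s)) * (\<alpha> * EE s - \<beta>) - \<alpha> * (EE s - 1) * (\<alpha> * (- lam * EE s))) / ((\<alpha> * EE s - \<beta>) * (\<alpha> * EE s - \<beta>))) (at s)"
    by (rule DERIV_divide[OF d1 d2 d])
  moreover have "((\<alpha> * (- lam * EE s)) * (\<alpha> * EE s - \<beta>) - \<alpha> * (EE s - 1) * (\<alpha> * (- lam * EE s))) / ((\<alpha> * EE s - \<beta>) * (\<alpha> * EE s - \<beta>)) = Xd s"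
    unfolding Xd_def using d by (simp add: field_simps power2_eq_square lam_def)
  ultimately show ?thesis unfolding X_def[abs_def] by simp
qed


definition "q = \<beta> / \<alpha>"
definition "theta = N * (\<nu> / \<alpha>)"
definition "cc = \<alpha> * (N - 1) / (\<alpha> * N - \<beta>)"

lemma q_range: "0 \<le> q" "q < 1" using a_pos ab b0 by (auto simp: q_def)

lemma X_0: "X 0 = cc" by (simp add: X_def EE_0 cc_def)
lemma X_tau: "X tau = 0" by (simp add: X_def EE_tau)

lemma one_minus_X: "EE s \<ge> 1 \<Longrightarrow> 1 - X s = lam / (\<alpha> * EE s - \<beta>)"
  using den_pos[of s] by (simp add: X_def field_simps lam_def)
lemma one_minus_qX: "EE s \<ge> 1 \<Longrightarrow> 1 - q * X s = lam * EE s / (\<alpha> * EE s - \<beta>)"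
  using den_pos[of s] a_pos by (simp add: X_def q_def field_simps lam_def)
lemma X_range: "s \<in> {0..tau} \<Longrightarrow> 0 \<le> X s \<and> X s < 1"
proof -
  assume s: "s \<in> {0..tau}"
  then have e: "EE s \<ge> 1" using EE_range by auto
  have "0 \<le> X s" using den_pos[OF e] e a_pos by (simp add: X_def)
  moreover have "1 - X s > 0" using one_minus_X[OF e] den_pos[OF e] lam_pos by simp
  ultimately show ?thesis by simp
qed

lemma integrand_Suc:
  assumes s: "s \<in> {0..tau}"
  shows "\<nu> * exp (lam * s) * bd_prob \<alpha> \<beta> (tau - s) (Suc j) = theta * X s ^ j * (- Xd s) / EE s"
proof -
  have e: "EE s \<ge> 1" using EE_range[OF s] by auto
  have D: "\<alpha> * EE s - \<beta> > 0" by (rule den_pos[OF e])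
  have ex: "exp (lam * s) = N / EE s" using exp_EE[of s] e by (simp add: field_simps)
  have p0: "1 - \<beta> * (EE s - 1) / (\<alpha> * EE s - \<beta>) = lam * EE s / (\<alpha> * EE s - \<beta>)"
    using D by (simp add: field_simps lam_def)
  have bd: "bd_prob \<alpha> \<beta> (tau - s) (Suc j) = (lam * EE s / (\<alpha> * EE s - \<beta>)) * (lam / (\<alpha> * EE s - \<beta>)) * X s ^ j"
    unfolding bd_prob_def Let_def using p0 one_minus_X[OF e]
    by (simp add: EE_def[symmetric] lam_def[symmetric] X_def[symmetric])
  show ?thesis unfolding bd ex theta_def Xd_def using D e a_pos
    by (intro alg_Suc) auto
qed

lemma integrand_0:
  assumes s: "s \<in> {0..tau}"
  shows "\<nu> * exp (lam * s) * bd_prob \<alpha> \<beta> (tau - s) 0 = - theta * q * X s * Xd s / (1 - q * X s) ^ 2"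
proof -
  have e: "EE s \<ge> 1" using EE_range[OF s] by auto
  have D: "\<alpha> * EE s - \<beta> > 0" by (rule den_pos[OF e])
  have ex: "exp (lam * s) = N / EE s" using exp_EE[of s] e by (simp add: field_simps)
  have bd: "bd_prob \<alpha> \<beta> (tau - s) 0 = \<beta> * (EE s - 1) / (\<alpha> * EE s - \<beta>)"
    unfolding bd_prob_def Let_def by (simp add: EE_def lam_def)
  show ?thesis unfolding bd ex one_minus_qX[OF e] unfolding theta_def Xd_def q_def X_def using D e a_pos lam_pos
    by (intro alg_0) auto
qed


definition "phi = 1 - 1 / N"
definition "yy = - phi * q / (1 - q)"
definition "hh k t = (1 - t) ^ k / (1 - yy * t)"
definition "M0 = \<nu> * (N - 1) / lam"

lemma phi_pos: "phi > 0" "phi < 1" using N1 by (auto simp: phi_def)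

lemma yy_nonpos: "yy \<le> 0"
  unfolding yy_def using q_range phi_pos by (intro divide_nonpos_pos) auto

lemma mass_integral: "((\<lambda>s. \<nu> * exp (lam * s)) has_integral M0) {0..tau}"
proof -
  have "((\<lambda>s. \<nu> * exp (lam * s)) has_integral (\<nu> / lam * exp (lam * tau) - \<nu> / lam * exp (lam * 0))) {0..tau}"
    by (rule ftc_real[where D = "\<lambda>s. \<nu> / lam * (exp (lam * s) * (lam * 1))"])
      (use tau_pos lam_pos in \<open>auto intro!: derivative_eq_intros\<close>)
  moreover have "\<nu> / lam * exp (lam * tau) - \<nu> / lam * exp (lam * 0) = M0"
    using lam_pos N1 by (simp add: tau_def M0_def field_simps)
  ultimately show ?thesis by simp
qed

lemma X_le_cc: "s \<in> {0..tau} \<Longrightarrow> X s \<le> cc"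
proof -
  assume s: "s \<in> {0..tau}"
  then have e: "EE s \<ge> 1" and eN: "EE s \<le> N" using EE_range by auto
  have e0: "EE 0 \<ge> 1" using EE_0 N1 by simp
  note d0 = den_pos[OF e0]
  have "lam / (\<alpha> * EE 0 - \<beta>) \<le> lam / (\<alpha> * EE s - \<beta>)"
    using den_pos[OF e] lam_pos eN a_pos EE_0 d0 by (intro divide_left_mono) auto
  then show ?thesis using one_minus_X[OF e] one_minus_X[OF e0] X_0 by simp
qed

lemma cc_pos: "cc > 0"
proof -
  have "\<alpha> * N > \<alpha> * 1" using N1 a_pos by (intro mult_strict_left_mono) auto
  then have "\<alpha> * N - \<beta> > 0" using ab by linarith
  moreover have "\<alpha> * (N - 1) > 0" using N1 a_pos by simp
  ultimately show ?thesis unfolding cc_def by simp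
qed

lemma w0_integral_pos:
  assumes bpos: "\<beta> > 0"
  shows "((\<lambda>s. \<nu> * exp (lam * s) * bd_prob \<alpha> \<beta> (tau - s) 0) has_integral (theta / q * ln (1 - q * cc) + M0)) {0..tau}"
proof -
  have qpos: "q > 0" using bpos a_pos by (simp add: q_def)
  define F where "F = (\<lambda>s. - theta / q * (ln (1 - q * X s) + inverse (1 - q * X s)))"
  have u_pos: "1 - q * X s > 0" if "EE s \<ge> 1" for s
    using one_minus_qX[OF that] den_pos[OF that] lam_pos that by simp
  have "((\<lambda>s. \<nu> * exp (lam * s) * bd_prob \<alpha> \<beta> (tau - s) 0) has_integral (F tau - F 0)) {0..tau}"
  proof (rule ftc_real[where D = "\<lambda>s. - theta / q * ((- (q * Xd s)) / (1 - q * X s) - (- (q * Xd s)) / (1 - q * X s) ^ 2)"])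
    show "0 \<le> tau" using tau_pos by simp
  next
    fix s assume s: "s \<in> {0..tau}"
    then have e: "EE s \<ge> 1" using EE_range by auto
    have u: "1 - q * X s > 0" by (rule u_pos[OF e])
    then have u1: "1 - q * X s \<noteq> 0" "q * X s \<noteq> 1" "q * X s < 1" by auto
    have du: "((\<lambda>s. 1 - q * X s) has_real_derivative - (q * Xd s)) (at s)"
      by (auto intro!: derivative_eq_intros X_deriv[OF e])
    have dl: "((\<lambda>s. ln (1 - q * X s)) has_real_derivative (1 / (1 - q * X s)) * - (q * Xd s)) (at s)"
      by (rule DERIV_chain2[OF DERIV_ln_divide[OF u] du])
    have di: "((\<lambda>s. inverse (1 - q * X s)) has_real_derivative - (- (q * Xd s) * inverse ((1 - q * X s) ^ Suc (Suc 0)))) (at s)"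
      by (rule DERIV_inverse_fun[OF du u1(1)])
    have "(F has_real_derivative - theta / q * ((1 / (1 - q * X s)) * - (q * Xd s) + - (- (q * Xd s) * inverse ((1 - q * X s) ^ Suc (Suc 0))))) (at s)"
      unfolding F_def by (intro DERIV_cmult DERIV_add dl di)
    moreover have "- theta / q * ((1 / (1 - q * X s)) * - (q * Xd s) + - (- (q * Xd s) * inverse ((1 - q * X s) ^ Suc (Suc 0)))) = - theta / q * ((- (q * Xd s)) / (1 - q * X s) - (- (q * Xd s)) / (1 - q * X s) ^ 2)"
      by (simp add: divide_inverse power2_eq_square)
    ultimately show "(F has_real_derivative - theta / q * ((- (q * Xd s)) / (1 - q * X s) - (- (q * Xd s)) / (1 - q * X s) ^ 2)) (at s)"
      by (rule DERIV_cong)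
  next
    fix s assume s: "s \<in> {0..tau}"
    then have e: "EE s \<ge> 1" using EE_range by auto
    have u: "1 - q * X s > 0" by (rule u_pos[OF e])
    show "- theta / q * ((- (q * Xd s)) / (1 - q * X s) - (- (q * Xd s)) / (1 - q * X s) ^ 2) =
      \<nu> * exp (lam * s) * bd_prob \<alpha> \<beta> (tau - s) 0"
      unfolding integrand_0[OF s] using u qpos by (intro alg_w0) auto
  qed
  moreover have "F tau - F 0 = theta / q * ln (1 - q * cc) + M0"
  proof -
    have "F tau - F 0 = theta / q * ln (1 - q * cc) + theta / q * (1 / (1 - q * cc) - 1)"
      using u_pos[of 0] EE_0 N1 qpos unfolding F_def X_tau X_0 by (simp add: field_simps inverse_eq_divide)
    also have "theta / q * (1 / (1 - q * cc) - 1) = M0"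
    proof -
      have "\<alpha> * N > \<alpha> * 1" using N1 a_pos by (intro mult_strict_left_mono) auto
      then have D: "\<alpha> * N - \<beta> > 0" using ab by linarith
      have h1: "1 - q * cc = lam * N / (\<alpha> * N - \<beta>)"
        unfolding q_def cc_def lam_def using D a_pos by (simp add: field_simps)
      have h2: "1 / (1 - q * cc) - 1 = \<beta> * (N - 1) / (lam * N)"
        unfolding h1 using D lam_pos N1 by (simp add: field_simps) (simp add: lam_def algebra_simps)
      show ?thesis unfolding h2 unfolding theta_def q_def M0_def using a_pos bpos lam_pos N1
        by (simp add: field_simps)
    qed
    finally show ?thesis .
  qed
  ultimately show ?thesis by simp
qed

lemma w0_integral_zero:
  assumes bz: "\<beta> = 0"
  shows "((\<lambda>s. \<nu> * exp (lam * s) * bd_prob \<alpha> \<beta> (tau - s) 0) has_integral 0) {0..tau}"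
proof -
  have "(\<lambda>s. \<nu> * exp (lam * s) * bd_prob \<alpha> \<beta> (tau - s) 0) = (\<lambda>s. 0)"
    using bz by (simp add: bd_prob_def Let_def)
  then show ?thesis by simp
qed


lemma R1: "EE s \<ge> 1 \<Longrightarrow> X s * (1 - q) / (1 - q * X s) = (EE s - 1) / EE s"
proof -
  assume e: "EE s \<ge> 1"
  have D: "\<alpha> * EE s - \<beta> > 0" by (rule den_pos[OF e])
  have q1: "1 - q = lam / \<alpha>" using a_pos by (simp add: q_def lam_def field_simps)
  show ?thesis unfolding one_minus_qX[OF e] q1 using D e a_pos lam_pos
    by (simp add: X_def field_simps)
qed

lemma cc_alt: "cc * (1 - q * (1 - phi)) = phi"
proof -
  have "\<alpha> * N > \<alpha> * 1" using N1 a_pos by (intro mult_strict_left_mono) auto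
  then have D: "\<alpha> * N - \<beta> > 0" using ab by linarith
  show ?thesis unfolding cc_def q_def phi_def using D a_pos N1 by (simp add: field_simps)
qed

lemma R2: "cc * (1 - yy) + yy * x = phi * (1 - q * x) / (1 - q)"
proof -
  have q1: "1 - q > 0" using q_range by simp
  have "cc * (1 - yy) = cc * (1 - q * (1 - phi)) / (1 - q)"
    unfolding yy_def using q1 by (simp add: field_simps)
  then have "cc * (1 - yy) = phi / (1 - q)" using cc_alt by simp
  moreover have "phi / (1 - q) + yy * x = phi * (1 - q * x) / (1 - q)"
    unfolding yy_def using q1 by (simp add: diff_divide_distrib right_diff_distrib)
  ultimately show ?thesis by simp
qed

lemma wSuc_q0:
  assumes bz: "\<beta> = 0"
  shows "((\<lambda>s. \<nu> * exp (lam * s) * bd_prob \<alpha> \<beta> (tau - s) (Suc j)) has_integral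
           theta * (cc ^ Suc j / real (Suc j) - cc ^ Suc (Suc j) / real (Suc (Suc j)))) {0..tau}"
proof -
  define F where "F = (\<lambda>s. - theta * (X s ^ Suc j / real (Suc j) - X s ^ Suc (Suc j) / real (Suc (Suc j))))"
  have "((\<lambda>s. \<nu> * exp (lam * s) * bd_prob \<alpha> \<beta> (tau - s) (Suc j)) has_integral (F tau - F 0)) {0..tau}"
  proof (rule ftc_real[where D = "\<lambda>s. - theta * (X s ^ j * Xd s - X s ^ Suc j * Xd s)"])
    show "0 \<le> tau" using tau_pos by simp
  next
    fix s assume s: "s \<in> {0..tau}"
    then have e: "EE s \<ge> 1" using EE_range by auto
    have "(F has_real_derivative - theta * (X s ^ j * Xd s - X s ^ Suc j * Xd s)) (at s)"
      unfolding F_def by (intro DERIV_cmult DERIV_diff deriv_pow_div[where j = j, OF X_deriv[OF e]]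
          deriv_pow_div[where j = "Suc j", OF X_deriv[OF e]])
    then show "(F has_real_derivative - theta * (X s ^ j * Xd s - X s ^ Suc j * Xd s)) (at s)" .
  next
    fix s assume s: "s \<in> {0..tau}"
    then have e: "EE s \<ge> 1" using EE_range by auto
    have "1 - X s = 1 / EE s"
    proof -
      have "1 - X s = lam / (\<alpha> * EE s - \<beta>)" by (rule one_minus_X[OF e])
      also have "\<dots> = 1 / EE s" unfolding lam_def using bz a_pos e by simp
      finally show ?thesis .
    qed
    then have "- theta * (X s ^ j * Xd s - X s ^ Suc j * Xd s) = theta * X s ^ j * (- Xd s) / EE s"
    proof -
      assume h: "1 - X s = 1 / EE s"
      have "- theta * (X s ^ j * Xd s - X s ^ Suc j * Xd s) = theta * X s ^ j * (- Xd s) * (1 - X s)"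
        by (simp add: algebra_simps)
      then show ?thesis unfolding h by simp
    qed
    then show "- theta * (X s ^ j * Xd s - X s ^ Suc j * Xd s) = \<nu> * exp (lam * s) * bd_prob \<alpha> \<beta> (tau - s) (Suc j)"
      unfolding integrand_Suc[OF s] by simp
  qed
  moreover have "F tau - F 0 = theta * (cc ^ Suc j / real (Suc j) - cc ^ Suc (Suc j) / real (Suc (Suc j)))"
    unfolding F_def X_tau X_0 by simp
  ultimately show ?thesis by simp
qed

lemma wSuc_gen:
  shows "((\<lambda>s. \<nu> * exp (lam * s) * bd_prob \<alpha> \<beta> (tau - s) (Suc j)) has_integral
           theta * cc ^ Suc j / real (Suc j) - theta * cc ^ Suc j * phi * integral {0..1} (hh (Suc j))) {0..tau}"
proof -
  define F where "F = (\<lambda>s. - theta * (X s ^ Suc j / real (Suc j)))"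
  have A: "((\<lambda>s. - theta * X s ^ j * Xd s) has_integral (F tau - F 0)) {0..tau}"
  proof (rule ftc_real[where D = "\<lambda>s. - theta * X s ^ j * Xd s"])
    show "0 \<le> tau" using tau_pos by simp
  next
    fix s assume s: "s \<in> {0..tau}"
    then have e: "EE s \<ge> 1" using EE_range by auto
    have "(F has_real_derivative - theta * (X s ^ j * Xd s)) (at s)"
      unfolding F_def by (intro DERIV_cmult deriv_pow_div[where j = j, OF X_deriv[OF e]])
    then show "(F has_real_derivative - theta * X s ^ j * Xd s) (at s)" by (simp add: mult.assoc)
  qed simp
  have FA: "F tau - F 0 = theta * cc ^ Suc j / real (Suc j)"
    unfolding F_def X_tau X_0 by simp
  define g where "g = (\<lambda>s. 1 - X s / cc)"
  have B: "((\<lambda>s. (- Xd s / cc) *\<^sub>R hh (Suc j) (g s)) has_integral integral {g 0..g tau} (hh (Suc j))) {0..tau}"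
  proof (rule has_integral_substitution[where c = 0 and d = 1])
    show "0 \<le> tau" using tau_pos by simp
    show "g 0 \<le> g tau" unfolding g_def X_0 X_tau using cc_pos by simp
    show "g ` {0..tau} \<subseteq> {0..1}"
    proof
      fix v assume "v \<in> g ` {0..tau}"
      then obtain s where s: "s \<in> {0..tau}" and v: "v = g s" by auto
      have "0 \<le> X s" "X s \<le> cc" using X_range[OF s] X_le_cc[OF s] by auto
      then show "v \<in> {0..1}" unfolding v g_def using cc_pos by (auto simp: field_simps)
    qed
    show "continuous_on {0..1} (hh (Suc j))"
    proof -
      have "\<And>t. t \<in> {0..1::real} \<Longrightarrow> 1 - yy * t \<noteq> 0"
      proof -
        fix t :: real assume "t \<in> {0..1}"
        then have "yy * t \<le> 0" using yy_nonpos by (simp add: mult_nonpos_nonneg)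
        then show "1 - yy * t \<noteq> 0" by simp
      qed
      then show ?thesis unfolding hh_def[abs_def] by (intro continuous_intros) auto
    qed
    fix s assume s: "s \<in> {0..tau}"
    then have e: "EE s \<ge> 1" using EE_range by auto
    have "(g has_real_derivative 0 - Xd s / cc) (at s)"
      unfolding g_def by (intro DERIV_diff DERIV_const DERIV_cdivide X_deriv[OF e])
    then show "(g has_real_derivative - Xd s / cc) (at s within {0..tau})"
      by (simp add: has_field_derivative_at_within)
  qed
  have gv: "g 0 = 0" "g tau = 1" unfolding g_def X_0 X_tau using cc_pos by auto
  have B': "((\<lambda>s. theta * cc ^ Suc j * phi * ((- Xd s / cc) * hh (Suc j) (g s))) has_integral
      theta * cc ^ Suc j * phi * integral {0..1} (hh (Suc j))) {0..tau}"
    using has_integral_mult_right[OF B, of "theta * cc ^ Suc j * phi"] gv by simp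
  have C: "((\<lambda>s. - theta * X s ^ j * Xd s - theta * cc ^ Suc j * phi * ((- Xd s / cc) * hh (Suc j) (g s))) has_integral
      theta * cc ^ Suc j / real (Suc j) - theta * cc ^ Suc j * phi * integral {0..1} (hh (Suc j))) {0..tau}"
    using has_integral_diff[OF A B'] FA by simp
  show ?thesis
  proof (subst has_integral_cong[where g = "\<lambda>s. - theta * X s ^ j * Xd s - theta * cc ^ Suc j * phi * ((- Xd s / cc) * hh (Suc j) (g s))"])
    fix s assume s: "s \<in> {0..tau}"
    then have e: "EE s \<ge> 1" using EE_range by auto
    have u: "1 - q * X s > 0" using one_minus_qX[OF e] den_pos[OF e] lam_pos e by simp
    show "\<nu> * exp (lam * s) * bd_prob \<alpha> \<beta> (tau - s) (Suc j) = - theta * X s ^ j * Xd s - theta * cc ^ Suc j * phi * ((- Xd s / cc) * hh (Suc j) (g s))"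
      unfolding integrand_Suc[OF s] g_def hh_def
      by (rule alg_split[OF R1[OF e] R2]) (use e cc_pos u q_range phi_pos in auto)
  qed (rule C)
qed


lemma bd_range:
  assumes s: "s \<in> {0..tau}"
  shows "0 \<le> bd_prob \<alpha> \<beta> (tau - s) n \<and> bd_prob \<alpha> \<beta> (tau - s) n \<le> 1"
proof -
  have e: "EE s \<ge> 1" using EE_range[OF s] by auto
  have D: "\<alpha> * EE s - \<beta> > 0" by (rule den_pos[OF e])
  show ?thesis
  proof (cases n)
    case 0
    have bd: "bd_prob \<alpha> \<beta> (tau - s) 0 = \<beta> * (EE s - 1) / (\<alpha> * EE s - \<beta>)"
      unfolding bd_prob_def Let_def by (simp add: EE_def lam_def)
    have "\<beta> * EE s \<le> \<alpha> * EE s" using ab e by (intro mult_right_mono) auto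
    then have "\<beta> * (EE s - 1) \<le> \<alpha> * EE s - \<beta>" by (simp add: algebra_simps)
    moreover have "0 \<le> \<beta> * (EE s - 1)" using b0 e by simp
    ultimately show ?thesis using 0 D by (simp add: bd divide_le_eq_1)
  next
    case (Suc j)
    have p0: "1 - \<beta> * (EE s - 1) / (\<alpha> * EE s - \<beta>) = lam * EE s / (\<alpha> * EE s - \<beta>)"
      using D by (simp add: field_simps lam_def)
    have bd: "bd_prob \<alpha> \<beta> (tau - s) (Suc j) = (lam * EE s / (\<alpha> * EE s - \<beta>)) * (lam / (\<alpha> * EE s - \<beta>)) * X s ^ j"
      unfolding bd_prob_def Let_def using p0 one_minus_X[OF e]
      by (simp add: EE_def[symmetric] lam_def[symmetric] X_def[symmetric])
    have "\<beta> * 1 \<le> \<beta> * EE s" using b0 e by (intro mult_left_mono) auto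
    then have f1: "lam * EE s \<le> \<alpha> * EE s - \<beta>" by (simp add: lam_def algebra_simps)
    have "\<alpha> * 1 \<le> \<alpha> * EE s" using a_pos e by (intro mult_left_mono) auto
    then have f2: "lam \<le> \<alpha> * EE s - \<beta>" by (simp add: lam_def algebra_simps)
    have a1: "0 \<le> lam * EE s / (\<alpha> * EE s - \<beta>)" "lam * EE s / (\<alpha> * EE s - \<beta>) \<le> 1"
      using f1 D lam_pos e by (auto simp: divide_le_eq_1)
    have a2: "0 \<le> lam / (\<alpha> * EE s - \<beta>)" "lam / (\<alpha> * EE s - \<beta>) \<le> 1"
      using f2 D lam_pos by (auto simp: divide_le_eq_1)
    have a3: "0 \<le> X s ^ j" "X s ^ j \<le> 1" using X_range[OF s] by (auto intro: power_le_one)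
    have "(lam * EE s / (\<alpha> * EE s - \<beta>)) * (lam / (\<alpha> * EE s - \<beta>)) * X s ^ j \<le> 1 * 1 * 1"
      using a1 a2 a3 by (intro mult_mono) auto
    moreover have "0 \<le> (lam * EE s / (\<alpha> * EE s - \<beta>)) * (lam / (\<alpha> * EE s - \<beta>)) * X s ^ j"
      using a1 a2 a3 by (intro mult_nonneg_nonneg) auto
    ultimately show ?thesis unfolding Suc bd by simp
  qed
qed

lemma wt_has_int: "\<exists>v. ((\<lambda>s. \<nu> * exp (lam * s) * bd_prob \<alpha> \<beta> (tau - s) n) has_integral v) {0..tau}"
proof (cases n)
  case 0
  then show ?thesis using w0_integral_zero w0_integral_pos b0 by (cases "\<beta> = 0") auto
next
  case (Suc j)
  then show ?thesis using wSuc_gen by blast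
qed

lemma wt_bounds:
  "0 \<le> integral {0..tau} (\<lambda>s. \<nu> * exp (lam * s) * bd_prob \<alpha> \<beta> (tau - s) n) \<and>
   integral {0..tau} (\<lambda>s. \<nu> * exp (lam * s) * bd_prob \<alpha> \<beta> (tau - s) n) \<le> M0"
proof -
  obtain v where v: "((\<lambda>s. \<nu> * exp (lam * s) * bd_prob \<alpha> \<beta> (tau - s) n) has_integral v) {0..tau}"
    using wt_has_int by blast
  have "0 \<le> v"
    by (rule has_integral_nonneg[OF v]) (use bd_range nu in auto)
  moreover have "v \<le> M0"
  proof (rule has_integral_le[OF v mass_integral])
    fix s assume s: "s \<in> {0..tau}"
    have "\<nu> * exp (lam * s) > 0" using nu by simp
    then show "\<nu> * exp (lam * s) * bd_prob \<alpha> \<beta> (tau - s) n \<le> \<nu> * exp (lam * s)"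
      using bd_range[OF s, of n] by (intro mult_left_le) auto
  qed
  ultimately show ?thesis using v by (simp add: integral_unique)
qed

end

theorem mainTheorem6:
  fixes \<delta> \<nu> \<alpha> \<beta> N :: real
  assumes "\<delta> > 0" and "\<nu> > 0" and "\<beta> \<ge> 0" and "\<alpha> > \<beta>" and "N > 1"
    and "\<delta> / (\<alpha> - \<beta>) = 1"
  defines "q \<equiv> \<beta> / \<alpha>" and "\<mu> \<equiv> \<nu> / \<alpha>"
  defines "\<theta> \<equiv> N * \<mu>" and "\<phi> \<equiv> 1 - 1 / N"
  defines "qc \<equiv> (\<lambda>k::nat.
      if q = 0 then
        (if k = 0 then - \<theta> * \<phi>
         else \<theta> * (\<phi> ^ k / real k - \<phi> ^ (k + 1) / real (k + 1)))
      else
        (if k = 0 then - \<theta> / q * ln (1 + \<phi> * q / (1 - q))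
         else \<theta> * \<phi> ^ k / (1 - q * (1 - \<phi>)) ^ k *
              (1 / real k - \<phi> / real (k + 1) *
                 hyp2f1 1 1 (2 + real k) (- \<phi> * q / (1 - q)))))"
  shows "(\<exists>r>0. \<forall>z::real. \<bar>z\<bar> < r \<longrightarrow>
            (\<lambda>k. qc k * z ^ k) sums ln (pgfB \<alpha> \<beta> \<delta> \<nu> N z)) \<and>
         probB \<alpha> \<beta> \<delta> \<nu> N 0 = exp (qc 0) \<and>
         (\<forall>n\<ge>1. probB \<alpha> \<beta> \<delta> \<nu> N n =
           1 / real n * (\<Sum>k<n. real (n - k) * qc (n - k) * probB \<alpha> \<beta> \<delta> \<nu> N k))"
  proof -
  have lam_ne: "\<alpha> - \<beta> \<noteq> 0" using assms(4) by simp
  have dl: "\<delta> = \<alpha> - \<beta>" using assms(6) lam_ne by (simp add: field_simps)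
  interpret B: bdsetup \<alpha> \<beta> \<nu> N using assms(2-5) by unfold_locales auto
  have dlam: "\<delta> = B.lam" by (simp add: dl B.lam_def)
  have tauN: "ln N / \<delta> = B.tau" by (simp add: dlam B.tau_def)
  define w where "w = clone_weight \<alpha> \<beta> \<delta> \<nu> (ln N / \<delta>)"
  have w_eq: "w n = integral {0..B.tau} (\<lambda>s. \<nu> * exp (B.lam * s) * bd_prob \<alpha> \<beta> (B.tau - s) n)" for n
    unfolding w_def clone_weight_def tauN unfolding dlam ..
  have M: "mut_mass \<delta> \<nu> (ln N / \<delta>) = B.M0"
    unfolding mut_mass_def tauN unfolding dlam by (rule integral_unique[OF B.mass_integral])
  have P: "probB \<alpha> \<beta> \<delta> \<nu> N = (\<lambda>n. exp (- B.M0) * (\<Sum>m. conv_pow w m n / fact m))"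
    unfolding probB_def Let_def M w_def ..
  have wnn: "\<And>n. w n \<ge> 0" and wle: "\<And>n. w n \<le> B.M0"
    using B.wt_bounds unfolding w_eq by auto
  have qB: "q = B.q" using \<open>q \<equiv> \<beta> / \<alpha>\<close> by (simp add: B.q_def)
  have thB: "\<theta> = B.theta" using \<open>\<theta> \<equiv> N * \<mu>\<close> \<open>\<mu> \<equiv> \<nu> / \<alpha>\<close> by (simp add: B.theta_def)
  have phB: "\<phi> = B.phi" using \<open>\<phi> \<equiv> 1 - 1 / N\<close> by (simp add: B.phi_def)
  have qc0: "qc 0 = - B.M0 + w 0" and qcS: "\<And>j. qc (Suc j) = w (Suc j)"
  proof -
    have "(\<beta> = 0 \<and> q = 0) \<or> (\<beta> > 0 \<and> q \<noteq> 0)"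
      using assms(3) B.a_pos by (auto simp: qB B.q_def)
    then have "qc 0 = - B.M0 + w 0 \<and> (\<forall>j. qc (Suc j) = w (Suc j))"
    proof
      assume h: "\<beta> = 0 \<and> q = 0"
      then have bz: "\<beta> = 0" and qz: "q = 0" by auto
      have w0: "w 0 = 0" unfolding w_eq using B.w0_integral_zero[OF bz] by (rule integral_unique)
      have c1: "\<theta> * \<phi> = B.M0"
        unfolding thB phB B.theta_def B.phi_def B.M0_def B.lam_def using bz B.a_pos assms(5)
        by (simp add: field_simps)
      have ccphi: "B.cc = \<phi>"
        unfolding phB B.phi_def B.cc_def using bz B.a_pos assms(5) by (simp add: field_simps)
      have "qc (Suc j) = w (Suc j)" for j
      proof -
        have "w (Suc j) = B.theta * (B.cc ^ Suc j / real (Suc j) - B.cc ^ Suc (Suc j) / real (Suc (Suc j)))"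
          unfolding w_eq using B.wSuc_q0[OF bz] by (rule integral_unique)
        then show ?thesis unfolding \<open>qc \<equiv> _\<close> using qz by (simp add: ccphi thB)
      qed
      moreover have "qc 0 = - B.M0 + w 0" unfolding \<open>qc \<equiv> _\<close> using qz w0 c1 by simp
      ultimately show ?thesis by simp
    next
      assume h: "\<beta> > 0 \<and> q \<noteq> 0"
      then have bp: "\<beta> > 0" and qn: "q \<noteq> 0" by auto
      have qr: "0 \<le> q" "q < 1" using B.q_range qB by auto
      have pr: "0 < \<phi>" "\<phi> < 1" using B.phi_pos phB by auto
      have Apos: "1 - q * (1 - \<phi>) > 0"
      proof -
        have "q * (1 - \<phi>) \<le> q" using qr pr by (intro mult_left_le) auto
        then show ?thesis using qr by linarith
      qed
      have ccA: "B.cc = \<phi> / (1 - q * (1 - \<phi>))"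
        using B.cc_alt Apos unfolding qB phB by (simp add: field_simps)
      have w0: "w 0 = B.theta / B.q * ln (1 - B.q * B.cc) + B.M0"
        unfolding w_eq using B.w0_integral_pos[OF bp] by (rule integral_unique)
      have lnrel: "ln (1 + \<phi> * q / (1 - q)) = - ln (1 - q * B.cc)"
      proof -
        have q1: "1 - q > 0" using qr by simp
        have e1: "1 + \<phi> * q / (1 - q) = (1 - q * (1 - \<phi>)) / (1 - q)"
          using q1 by (simp add: field_simps)
        have e2: "1 - q * B.cc = (1 - q) / (1 - q * (1 - \<phi>))"
          unfolding ccA using Apos by (simp add: field_simps)
        show ?thesis unfolding e1 e2 using q1 Apos by (simp add: ln_div)
      qed
      have "qc 0 = - B.M0 + w 0"
        unfolding \<open>qc \<equiv> _\<close> w0 using qn lnrel by (simp add: qB thB)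
      moreover have "qc (Suc j) = w (Suc j)" for j
      proof -
        have hy: "hyp2f1 1 1 (2 + real (Suc j)) (- \<phi> * q / (1 - q)) = real (Suc (Suc j)) * integral {0..1} (B.hh (Suc j))"
        proof -
          have "- \<phi> * q / (1 - q) = B.yy" by (simp add: B.yy_def phB qB)
          moreover have "(\<lambda>t. (1 - t) ^ Suc j / (1 - B.yy * t)) = B.hh (Suc j)" by (rule ext) (simp add: B.hh_def)
          ultimately show ?thesis using hyp_eq[OF B.yy_nonpos, of "Suc j"] by simp
        qed
        have wS: "w (Suc j) = B.theta * B.cc ^ Suc j / real (Suc j) - B.theta * B.cc ^ Suc j * B.phi * integral {0..1} (B.hh (Suc j))"
          unfolding w_eq using B.wSuc_gen by (rule integral_unique)
        have pw: "\<phi> ^ Suc j / (1 - q * (1 - \<phi>)) ^ Suc j = B.cc ^ Suc j"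
          unfolding ccA by (simp add: power_divide)
        have "qc (Suc j) = \<theta> * (\<phi> ^ Suc j / (1 - q * (1 - \<phi>)) ^ Suc j) *
              (1 / real (Suc j) - \<phi> / real (Suc j + 1) * hyp2f1 1 1 (2 + real (Suc j)) (- \<phi> * q / (1 - q)))"
          unfolding \<open>qc \<equiv> _\<close> using qn by simp
        also have "\<dots> = B.theta * B.cc ^ Suc j * (1 / real (Suc j) - \<phi> * integral {0..1} (B.hh (Suc j)))"
          unfolding pw hy thB by (simp del: of_nat_Suc)
        also have "\<dots> = w (Suc j)" unfolding wS phB by (simp add: algebra_simps)
        finally show ?thesis .
      qed
      ultimately show ?thesis by simp
    qed
    then show "qc 0 = - B.M0 + w 0" and "\<And>j. qc (Suc j) = w (Suc j)" by auto
  qed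
  have part1: "\<exists>r>0. \<forall>z::real. \<bar>z\<bar> < r \<longrightarrow> (\<lambda>k. qc k * z ^ k) sums ln (pgfB \<alpha> \<beta> \<delta> \<nu> N z)"
  proof (intro exI[of _ 1] conjI allI impI)
    fix z :: real assume z: "\<bar>z\<bar> < 1"
    define Wz where "Wz = (\<Sum>n. w n * z ^ n)"
    have s1: "(\<lambda>n. probB \<alpha> \<beta> \<delta> \<nu> N n * z ^ n) sums (exp (- B.M0) * exp Wz)"
      unfolding P Wz_def by (rule cp_pgf(1)[OF wnn wle z])
    have "pgfB \<alpha> \<beta> \<delta> \<nu> N z = exp (- B.M0 + Wz)"
      unfolding pgfB_def using sums_unique[OF s1] by (simp add: exp_add[symmetric])
    then have lnp: "ln (pgfB \<alpha> \<beta> \<delta> \<nu> N z) = - B.M0 + Wz" by simp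
    have sw: "(\<lambda>n. w n * z ^ n) sums Wz" unfolding Wz_def
      by (rule summable_sums[OF cp_pgf(2)[OF wnn wle z]])
    have "(\<lambda>k. (if k = 0 then - B.M0 else 0) + w k * z ^ k) sums (- B.M0 + Wz)"
      by (rule sums_add[OF _ sw]) (rule sums_single[where f = "\<lambda>_. - B.M0", simplified])
    moreover have "(\<lambda>k. (if k = 0 then - B.M0 else 0) + w k * z ^ k) = (\<lambda>k. qc k * z ^ k)"
    proof
      fix k show "(if k = 0 then - B.M0 else 0) + w k * z ^ k = qc k * z ^ k"
        by (cases k) (simp_all add: qc0 qcS)
    qed
    ultimately show "(\<lambda>k. qc k * z ^ k) sums ln (pgfB \<alpha> \<beta> \<delta> \<nu> N z)" unfolding lnp by simp
  qed simp
  have part2: "probB \<alpha> \<beta> \<delta> \<nu> N 0 = exp (qc 0)"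
    unfolding P qc0 using cp_p0[of w] by (simp add: exp_add[symmetric])
  have part3: "\<forall>n\<ge>1. probB \<alpha> \<beta> \<delta> \<nu> N n =
           1 / real n * (\<Sum>k<n. real (n - k) * qc (n - k) * probB \<alpha> \<beta> \<delta> \<nu> N k)"
  proof (intro allI impI)
    fix n :: nat assume n: "n \<ge> 1"
    have "(\<Sum>k<n. real (n - k) * qc (n - k) * probB \<alpha> \<beta> \<delta> \<nu> N k) = (\<Sum>k<n. real (n - k) * w (n - k) * probB \<alpha> \<beta> \<delta> \<nu> N k)"
    proof (rule sum.cong)
      fix k assume "k \<in> {..<n}"
      then obtain j where "n - k = Suc j" by (metis lessThan_iff zero_less_diff not0_implies_Suc less_numeral_extra(3))
      then show "real (n - k) * qc (n - k) * probB \<alpha> \<beta> \<delta> \<nu> N k = real (n - k) * w (n - k) * probB \<alpha> \<beta> \<delta> \<nu> N k"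
        by (simp add: qcS)
    qed simp
    moreover have "probB \<alpha> \<beta> \<delta> \<nu> N n = 1 / real n * (\<Sum>k<n. real (n - k) * w (n - k) * probB \<alpha> \<beta> \<delta> \<nu> N k)"
      unfolding P by (rule cp_rec[OF wnn wle n])
    ultimately show "probB \<alpha> \<beta> \<delta> \<nu> N n = 1 / real n * (\<Sum>k<n. real (n - k) * qc (n - k) * probB \<alpha> \<beta> \<delta> \<nu> N k)"
      by simp
  qed
  show ?thesis using part1 part2 part3 by blast
qed

end
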